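(* In the setting described in the context, Method 2 is well-defined: for any initial point $x^0\in\mathcal H$, each set $T_k\cap\Gamma_k$ is nonempty, so the projection $x^{k+1}=P_{T_k\cap\Gamma_k}(x^0)$ exists and the sequence $(x^k)_{k\in\mathbb N}$ can be generated.
   Context: Let $\mathcal H$ be a real Hilbert space with inner product $\langle\cdot,\cdot\rangle$ and norm $\|\cdot\|$. Let $A_1:\mathcal H\to\mathcal H$ be $\beta$-cocoercive for some $\beta>0$ (i.e. $\langle A_1x-A_1y,x-y\rangle\ge\beta\|A_1x-A_1y\|^2$ for all $x,y$), let $A_2:\mathcal H\to\mathcal H$ be maximally monotone and uniformly continuous, let $B:\mathcal H\rightrightarrows\mathcal H$ be maximally monotone, and set $A:=A_1+A_2$. Assume $\operatorname{zer}(A+B):=\{x:0\in Ax+Bx\}\neq\emptyset$. $J_{\alpha B}:=(I+\alpha B)^{-1}$ for $\alpha>0$, and $P_C$ denotes the orthogonal projection onto a nonempty closed convex set $C$. Fix $\theta,\delta\in(0,1)$, $\bar\delta>0$ with $1-\delta-\bar\delta>0$, and $\alpha_{-1}>0$ with $\alpha_{-1}\le4\beta\bar\delta$. Conceptual Algorithm: pick $x^0\in\mathcal H$. Given $x^k$ and $\alpha_{k-1}$, for $j\in\mathbb N$ let $\bar x^k_j:=J_{\alpha_{k-1}\theta^jB}(x^k-\alpha_{k-1}\theta^jAx^k)$ and let $j(k)$ be the smallest $j\in\mathbb N$ with $\alpha_{k-1}\theta^j\langle A_2x^k-A_2\bar x^k_j,x^k-\bar x^k_j\rangle\le\delta\|x^k-\bar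 x^k_j\|^2$. Set $\alpha_k:=\alpha_{k-1}\theta^{j(k)}$, $\bar x^k:=J_{\alpha_kB}(x^k-\alpha_kAx^k)$, $r_k:=\frac{\bar\delta}{\alpha_k}\|x^k-\bar x^k\|^2$, $T_k:=\{x\in\mathcal H:\langle \frac{x^k-\bar x^k}{\alpha_k}-(A_2x^k-A_2\bar x^k),x-\bar x^k\rangle\le r_k\}$ and $\Gamma_k:=\{x\in\mathcal H:\langle x^0-x^k,x-x^k\rangle\le0\}$. Method 2 sets $x^{k+1}:=P_{T_k\cap\Gamma_k}(x^0)$ and stops if $x^{k+1}=x^k$. *)

theory Defs
  imports "HOL-Analysis.Analysis"
begin

definition cocoercive :: "real \<Rightarrow> ('a::real_inner \<Rightarrow> 'a) \<Rightarrow> bool" where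
  "cocoercive \<beta> T \<longleftrightarrow>
     (\<forall>x y. inner (T x - T y) (x - y) \<ge> \<beta> * (norm (T x - T y))\<^sup>2)"

definition monotone_op :: "('a::real_inner \<Rightarrow> 'a set) \<Rightarrow> bool" where
  "monotone_op B \<longleftrightarrow>
     (\<forall>x y u v. u \<in> B x \<longrightarrow> v \<in> B y \<longrightarrow> inner (u - v) (x - y) \<ge> 0)"

definition maximal_monotone :: "('a::real_inner \<Rightarrow> 'a set) \<Rightarrow> bool" where
  "maximal_monotone B \<longleftrightarrow> monotone_op B \<and>
     (\<forall>C. monotone_op C \<and> (\<forall>x. B x \<subseteq> C x) \<longrightarrow> C = B)"

definition sv :: "('a \<Rightarrow> 'a) \<Rightarrow> 'a \<Rightarrow> 'a set" where
  "sv T = (\<lambda>x. {T x})"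

text \<open>Resolvent J_{\<alpha>B} = (I + \<alpha>B)^{-1}: J z is the x with z \<in> x + \<alpha> B x.\<close>
definition resolvent :: "real \<Rightarrow> ('a::real_vector \<Rightarrow> 'a set) \<Rightarrow> 'a \<Rightarrow> 'a" where
  "resolvent \<alpha> B z = (THE x. z \<in> (\<lambda>b. x + \<alpha> *\<^sub>R b) ` B x)"

definition is_proj :: "'a::real_normed_vector set \<Rightarrow> 'a \<Rightarrow> 'a \<Rightarrow> bool" where
  "is_proj C z p \<longleftrightarrow> p \<in> C \<and> (\<forall>y\<in>C. norm (z - p) \<le> norm (z - y))"

end

theory Submission
  imports Defs
begin


lemma cauchy_helper:
  fixes s :: "nat \<Rightarrow> 'a::real_normed_vector"
  assumes c: "c \<ge> 0" and h: "\<And>n m. (norm (s n - s m))\<^sup>2 \<le> c / (real n + 1) + c / (real m + 1)"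
  shows "Cauchy s"
proof (rule CauchyI)
  fix e :: real assume e: "0 < e"
  obtain M :: nat where M: "2 * c / (e^2) < real M + 1"
    using reals_Archimedean2 by (metis add.commute add_strict_increasing less_eq_real_def zero_less_one)
  show "\<exists>M. \<forall>m\<ge>M. \<forall>n\<ge>M. norm (s m - s n) < e"
  proof (intro exI allI impI)
    fix m n assume mn: "M \<le> m" "M \<le> n"
    have e2: "e^2 > 0" using e by simp
    have "c / (real m + 1) \<le> c / (real M + 1)"
      using mn c by (intro divide_left_mono) auto
    moreover have "c / (real n + 1) \<le> c / (real M + 1)"
      using mn c by (intro divide_left_mono) auto
    moreover have "2 * c / (real M + 1) < e^2"
      using M e2 by (simp add: divide_less_eq mult.commute pos_divide_less_eq)
    ultimately have "(norm (s m - s n))\<^sup>2 < e^2" using h[of m n] by linarith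
    then show "norm (s m - s n) < e" using e by (simp add: power_less_imp_less_base)
  qed
qed

lemma parallelogram_mid:
  fixes z a b :: "'a::real_inner"
  shows "(norm (a - b))\<^sup>2 = 2 * (norm (z - a))\<^sup>2 + 2 * (norm (z - b))\<^sup>2 - 4 * (norm (z - (1/2) *\<^sub>R (a + b)))\<^sup>2"
  by (simp add: power2_norm_eq_inner inner_simps inner_commute algebra_simps)

lemma norm_sub_scale:
  fixes a b :: "'a::real_inner"
  shows "(norm (a - t *\<^sub>R b))\<^sup>2 = (norm a)\<^sup>2 - 2 * t * inner a b + t^2 * (norm b)\<^sup>2"
  unfolding power2_norm_eq_inner
  by (simp add: inner_diff_left inner_diff_right inner_commute algebra_simps power2_eq_square)

lemma norm_add_scale:
  fixes a b :: "'a::real_inner"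
  shows "(norm (a + t *\<^sub>R b))\<^sup>2 = (norm a)\<^sup>2 + 2 * t * inner a b + t^2 * (norm b)\<^sup>2"
  unfolding power2_norm_eq_inner
  by (simp add: inner_add_left inner_add_right inner_commute algebra_simps power2_eq_square)

lemma lim_inv1: "(\<lambda>n. 1 / (real n + 1)) \<longlonglongrightarrow> 0"
  using LIMSEQ_inverse_real_of_nat by (simp add: inverse_eq_divide add.commute)

lemma proj_exists:
  fixes C :: "'a::{real_inner,complete_space} set"
  assumes cl: "closed C" and cv: "convex C" and ne: "C \<noteq> {}"
  shows "\<exists>p. is_proj C z p"
proof -
  define D where "D = (\<lambda>y. (norm (z - y))\<^sup>2) ` C"
  define d where "d = Inf D"
  have bdd: "bdd_below D" unfolding D_def by (rule bdd_belowI[of _ 0]) auto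
  have Dne: "D \<noteq> {}" using ne unfolding D_def by auto
  have dle: "d \<le> (norm (z - y))\<^sup>2" if "y \<in> C" for y
    unfolding d_def using that bdd by (intro cInf_lower) (auto simp: D_def)
  have "\<forall>n::nat. \<exists>y\<in>C. (norm (z - y))\<^sup>2 < d + 1 / (real n + 1)"
  proof
    fix n :: nat
    have "Inf D < d + 1 / (real n + 1)" unfolding d_def by (simp add: add_pos_pos)
    then obtain t where "t \<in> D" "t < d + 1 / (real n + 1)" using cInf_lessD[OF Dne] by blast
    then show "\<exists>y\<in>C. (norm (z - y))\<^sup>2 < d + 1 / (real n + 1)" unfolding D_def by auto
  qed
  then obtain s where sC: "\<And>n. s n \<in> C" and sl: "\<And>n. (norm (z - s n))\<^sup>2 < d + 1 / (real n + 1)"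
    by metis
  have "Cauchy s"
  proof (rule cauchy_helper[of 2])
    fix n m
    have "(1/2) *\<^sub>R s n + (1/2) *\<^sub>R s m \<in> C"
      by (rule convexD[OF cv sC sC]) auto
    then have "(1/2) *\<^sub>R (s n + s m) \<in> C" by (simp add: scaleR_add_right)
    then have "d \<le> (norm (z - (1/2) *\<^sub>R (s n + s m)))\<^sup>2" by (rule dle)
    then show "(norm (s n - s m))\<^sup>2 \<le> 2 / (real n + 1) + 2 / (real m + 1)"
      using parallelogram_mid[of "s n" "s m" z] sl[of n] sl[of m] by linarith
  qed simp
  then obtain p where lim: "s \<longlonglongrightarrow> p" using Cauchy_convergent convergent_def by blast
  have pC: "p \<in> C" using closed_sequentially[OF cl] sC lim by blast
  have l1: "(\<lambda>n. (norm (z - s n))\<^sup>2) \<longlonglongrightarrow> (norm (z - p))\<^sup>2"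
    by (intro tendsto_intros lim)
  have l2: "(\<lambda>n. d + 1 / (real n + 1)) \<longlonglongrightarrow> d + 0"
    by (intro tendsto_intros lim_inv1)
  have "(norm (z - p))\<^sup>2 \<le> d + 0"
    by (rule LIMSEQ_le[OF l1 l2]) (auto intro: less_imp_le sl)
  then have "norm (z - p) \<le> norm (z - y)" if "y \<in> C" for y
    using dle[OF that] by (simp add: power2_le_imp_le)
  then show ?thesis using pC unfolding is_proj_def by blast
qed

lemma proj_char:
  fixes C :: "'a::real_inner set"
  assumes "is_proj C z p" "convex C" "y \<in> C"
  shows "inner (z - p) (y - p) \<le> 0"
proof -
  have pC: "p \<in> C" and mn: "\<And>y. y \<in> C \<Longrightarrow> norm (z - p) \<le> norm (z - y)"
    using assms(1) unfolding is_proj_def by auto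
  have key: "2 * inner (z - p) (y - p) \<le> t * (norm (y - p))\<^sup>2" if t: "0 < t" "t \<le> 1" for t :: real
  proof -
    have "(1 - t) *\<^sub>R p + t *\<^sub>R y \<in> C"
      by (rule convexD[OF assms(2) pC assms(3)]) (use t in auto)
    then have "p + t *\<^sub>R (y - p) \<in> C" by (simp add: algebra_simps)
    then have "norm (z - p) \<le> norm (z - (p + t *\<^sub>R (y - p)))" by (rule mn)
    then have "(norm (z - p))\<^sup>2 \<le> (norm ((z - p) - t *\<^sub>R (y - p)))\<^sup>2"
      by (simp add: algebra_simps power_mono)
    also have "\<dots> = (norm (z - p))\<^sup>2 - 2 * t * inner (z - p) (y - p) + t^2 * (norm (y - p))\<^sup>2"
      by (rule norm_sub_scale)
    finally have "t * (2 * inner (z - p) (y - p)) \<le> t * (t * (norm (y - p))\<^sup>2)"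
      by (simp add: algebra_simps power2_eq_square)
    then show ?thesis using t by simp
  qed
  show ?thesis
  proof (rule ccontr)
    assume "\<not> ?thesis"
    then have pos: "inner (z - p) (y - p) > 0" by simp
    define N where "N = (norm (y - p))\<^sup>2"
    have N: "N > 0"
    proof (rule ccontr)
      assume "\<not> N > 0" then have "y = p" unfolding N_def by simp
      then show False using pos by simp
    qed
    define t where "t = min 1 (inner (z - p) (y - p) / N)"
    have t: "0 < t" "t \<le> 1" using pos N unfolding t_def by auto
    have "t * N \<le> inner (z - p) (y - p)"
      using N unfolding t_def by (simp add: min_def field_simps)
    then show False using key[OF t] pos unfolding N_def by linarith
  qed
qed

lemma small_t_le:
  fixes A B K :: real
  assumes K: "K \<ge> 0" and h: "\<And>t. 0 < t \<Longrightarrow> t \<le> 1 \<Longrightarrow> A \<le> B + t * K"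
  shows "A \<le> B"
proof (rule ccontr)
  assume "\<not> A \<le> B"
  then have d: "A - B > 0" by simp
  define t where "t = min 1 ((A - B) / (K + 1))"
  have t: "0 < t" "t \<le> 1" using d K unfolding t_def by auto
  have "t * K \<le> (A - B) / (K + 1) * K" using K unfolding t_def by (intro mult_right_mono) auto
  also have "\<dots> < A - B" using d K by (simp add: field_simps)
  finally show False using h[OF t] by linarith
qed

lemma mid_norm:
  fixes p q :: "'a::real_inner"
  shows "(norm ((1/2) *\<^sub>R (p + q)))\<^sup>2 / 2 = (norm p)\<^sup>2 / 4 + (norm q)\<^sup>2 / 4 - (norm (p - q))\<^sup>2 / 8"
  unfolding power2_norm_eq_inner
  apply (simp add: inner_add_left inner_add_right inner_diff_left inner_diff_right inner_commute algebra_simps)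
  apply (simp add: field_simps)
  done

lemma minty_core:
  fixes B :: "'a::{real_inner,complete_space} \<Rightarrow> 'a set"
  assumes mono: "\<And>a b a' b'. b \<in> B a \<Longrightarrow> b' \<in> B a' \<Longrightarrow> inner (b - b') (a - a') \<ge> 0"
    and maxl: "\<And>x u. (\<And>a b. b \<in> B a \<Longrightarrow> inner (u - b) (x - a) \<ge> 0) \<Longrightarrow> u \<in> B x"
  shows "\<exists>p. - p \<in> B p"
proof -
  define \<psi> where "\<psi> x u a b = inner x b + inner a u - inner a b" for x u a b :: 'a
  define E where "E x u t \<longleftrightarrow> (\<forall>a b. b \<in> B a \<longrightarrow> \<psi> x u a b \<le> t)" for x u :: 'a and t :: real
  define g where "g x u t = t + (norm x)\<^sup>2 / 2 + (norm u)\<^sup>2 / 2" for x u :: 'a and t :: real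
  have psi_alt: "\<psi> x u a b = inner x u - inner (u - b) (x - a)" for x u a b
    unfolding \<psi>_def by (simp add: inner_diff_left inner_diff_right inner_commute)
  have E_ge: "inner x u \<le> t" if "E x u t" for x u t
  proof (rule ccontr)
    assume lt: "\<not> inner x u \<le> t"
    show False
    proof (cases "\<forall>a b. b \<in> B a \<longrightarrow> inner (u - b) (x - a) \<ge> 0")
      case True
      then have "u \<in> B x" using maxl by blast
      then have "\<psi> x u x u \<le> t" using that unfolding E_def by blast
      then show False using lt unfolding \<psi>_def by simp
    next
      case False
      then obtain a b where ab: "b \<in> B a" "inner (u - b) (x - a) < 0" by force
      then have "\<psi> x u a b \<le> t" using that unfolding E_def by blast
      then show False using lt ab(2) unfolding psi_alt by simp
    qed
  qed
  have g_nn: "g x u t \<ge> 0" if "E x u t" for x u t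
  proof -
    have "g x u t \<ge> inner x u + (norm x)\<^sup>2 / 2 + (norm u)\<^sup>2 / 2" using E_ge[OF that] unfolding g_def by simp
    also have "inner x u + (norm x)\<^sup>2 / 2 + (norm u)\<^sup>2 / 2 = (norm (x + u))\<^sup>2 / 2"
      unfolding power2_norm_eq_inner by (simp add: inner_add_left inner_add_right inner_commute algebra_simps)
    finally show ?thesis by (smt (verit) zero_le_power2 divide_nonneg_pos)
  qed
  have E_graph: "E a b (inner a b)" if "b \<in> B a" for a b
    unfolding E_def
  proof (intro allI impI)
    fix a' b' assume "b' \<in> B a'"
    from mono[OF that this] show "\<psi> a b a' b' \<le> inner a b"
      unfolding \<psi>_def by (simp add: inner_diff_left inner_diff_right inner_commute)
  qed
  have E_comb: "E ((1 - l) *\<^sub>R x + l *\<^sub>R x') ((1 - l) *\<^sub>R u + l *\<^sub>R u') ((1 - l) * t + l * t')"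
    if "E x u t" "E x' u' t'" "0 \<le> l" "l \<le> 1" for x u t x' u' t' l
    unfolding E_def
  proof (intro allI impI)
    fix a b assume ab: "b \<in> B a"
    have "\<psi> ((1 - l) *\<^sub>R x + l *\<^sub>R x') ((1 - l) *\<^sub>R u + l *\<^sub>R u') a b = (1 - l) * \<psi> x u a b + l * \<psi> x' u' a b"
      unfolding \<psi>_def by (simp add: inner_add_left inner_add_right algebra_simps)
    also have "\<dots> \<le> (1 - l) * t + l * t'"
      using that ab unfolding E_def by (intro add_mono mult_left_mono) auto
    finally show "\<psi> ((1 - l) *\<^sub>R x + l *\<^sub>R x') ((1 - l) *\<^sub>R u + l *\<^sub>R u') a b \<le> (1 - l) * t + l * t'" .
  qed
  obtain a0 b0 where ab0: "b0 \<in> B a0"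
  proof -
    have "\<exists>a b. b \<in> B a"
    proof (rule ccontr)
      assume "\<not> ?thesis"
      moreover have "0 \<in> B 0" using maxl calculation by blast
      ultimately show False by blast
    qed
    then show ?thesis using that by blast
  qed
  define G where "G = {g x u t | x u t. E x u t}"
  define m where "m = Inf G"
  have Gne: "G \<noteq> {}" using E_graph[OF ab0] unfolding G_def by blast
  have Gbdd: "bdd_below G" unfolding G_def using g_nn by (intro bdd_belowI[of _ 0]) blast
  have m_le: "m \<le> g x u t" if "E x u t" for x u t
    unfolding m_def using that Gbdd by (intro cInf_lower) (auto simp: G_def)
  have "\<forall>n::nat. \<exists>x u t. E x u t \<and> g x u t < m + 1 / (real n + 1)"
  proof
    fix n :: nat
    have "Inf G < m + 1 / (real n + 1)" unfolding m_def by (simp add: add_pos_pos)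
    then obtain v where "v \<in> G" "v < m + 1 / (real n + 1)" using cInf_lessD[OF Gne] by blast
    then show "\<exists>x u t. E x u t \<and> g x u t < m + 1 / (real n + 1)" unfolding G_def by auto
  qed
  then obtain X U S where XUS: "\<And>n. E (X n) (U n) (S n)" and gl: "\<And>n. g (X n) (U n) (S n) < m + 1 / (real n + 1)"
    by metis
  have cauchy_est: "(norm (X n - X k))\<^sup>2 + (norm (U n - U k))\<^sup>2 \<le> 4 / (real n + 1) + 4 / (real k + 1)" for n k
  proof -
    have "E ((1 - 1/2) *\<^sub>R X n + (1/2) *\<^sub>R X k) ((1 - 1/2) *\<^sub>R U n + (1/2) *\<^sub>R U k) ((1 - 1/2) * S n + (1/2) * S k)"
      by (rule E_comb[OF XUS XUS]) auto
    then have "E ((1/2) *\<^sub>R (X n + X k)) ((1/2) *\<^sub>R (U n + U k)) (S n / 2 + S k / 2)"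
      by (simp add: scaleR_add_right)
    from m_le[OF this] have "m \<le> S n / 2 + S k / 2 + (norm ((1/2) *\<^sub>R (X n + X k)))\<^sup>2 / 2 + (norm ((1/2) *\<^sub>R (U n + U k)))\<^sup>2 / 2"
      unfolding g_def .
    then have "(norm (X n - X k))\<^sup>2 + (norm (U n - U k))\<^sup>2 \<le> 4 * (1 / (real n + 1)) + 4 * (1 / (real k + 1))"
      using mid_norm[of "X n" "X k"] mid_norm[of "U n" "U k"] gl[of n] gl[of k] unfolding g_def by linarith
    then show ?thesis by (simp add: algebra_simps)
  qed
  have "Cauchy X"
  proof (rule cauchy_helper[of 4])
    fix n k show "(norm (X n - X k))\<^sup>2 \<le> 4 / (real n + 1) + 4 / (real k + 1)"
      using cauchy_est[of n k] zero_le_power2[of "norm (U n - U k)"] by linarith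
  qed simp
  then obtain xb where limX: "X \<longlonglongrightarrow> xb" using Cauchy_convergent convergent_def by blast
  have "Cauchy U"
  proof (rule cauchy_helper[of 4])
    fix n k show "(norm (U n - U k))\<^sup>2 \<le> 4 / (real n + 1) + 4 / (real k + 1)"
      using cauchy_est[of n k] zero_le_power2[of "norm (X n - X k)"] by linarith
  qed simp
  then obtain ub where limU: "U \<longlonglongrightarrow> ub" using Cauchy_convergent convergent_def by blast
  have limg: "(\<lambda>n. g (X n) (U n) (S n)) \<longlonglongrightarrow> m"
  proof (rule real_tendsto_sandwich[where f="\<lambda>n. m" and h="\<lambda>n. m + 1 / (real n + 1)"])
    show "\<forall>\<^sub>F n in sequentially. m \<le> g (X n) (U n) (S n)" using m_le[OF XUS] by simp
    show "\<forall>\<^sub>F n in sequentially. g (X n) (U n) (S n) \<le> m + 1 / (real n + 1)" using gl by (simp add: less_imp_le)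
    show "(\<lambda>n. m) \<longlonglongrightarrow> m" by simp
    show "(\<lambda>n. m + 1 / (real n + 1)) \<longlonglongrightarrow> m" using tendsto_add[OF tendsto_const lim_inv1, of m] by simp
  qed
  define tb where "tb = m - (norm xb)\<^sup>2 / 2 - (norm ub)\<^sup>2 / 2"
  have limS: "S \<longlonglongrightarrow> tb"
  proof -
    have "(\<lambda>n. g (X n) (U n) (S n) - (norm (X n))\<^sup>2 / 2 - (norm (U n))\<^sup>2 / 2) \<longlonglongrightarrow> tb"
      unfolding tb_def by (intro tendsto_intros limg limX limU) simp_all
    then show ?thesis unfolding g_def by simp
  qed
  have Eb: "E xb ub tb" unfolding E_def
  proof (intro allI impI)
    fix a b assume "b \<in> B a"
    have l1: "(\<lambda>n. \<psi> (X n) (U n) a b) \<longlonglongrightarrow> \<psi> xb ub a b"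
      unfolding \<psi>_def by (intro tendsto_intros limX limU)
    show "\<psi> xb ub a b \<le> tb"
      by (rule LIMSEQ_le[OF l1 limS]) (use XUS \<open>b \<in> B a\<close> in \<open>auto simp: E_def\<close>)
  qed
  have gb: "g xb ub tb = m" unfolding g_def tb_def by simp
  have key: "inner (a + ub) (b + xb) \<ge> (norm (xb + ub))\<^sup>2" if ab: "b \<in> B a" for a b
  proof -
    define K where "K = ((norm (a - xb))\<^sup>2 + (norm (b - ub))\<^sup>2) / 2"
    have K: "K \<ge> 0" unfolding K_def by simp
    have "tb \<le> inner a b + inner xb (a - xb) + inner ub (b - ub)"
    proof (rule small_t_le[OF K])
      fix l :: real assume l: "0 < l" "l \<le> 1"
      have "E ((1 - l) *\<^sub>R xb + l *\<^sub>R a) ((1 - l) *\<^sub>R ub + l *\<^sub>R b) ((1 - l) * tb + l * inner a b)"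
        using l by (intro E_comb[OF Eb E_graph[OF ab]]) auto
      from m_le[OF this] have "m \<le> (1 - l) * tb + l * inner a b + (norm (xb + l *\<^sub>R (a - xb)))\<^sup>2 / 2 + (norm (ub + l *\<^sub>R (b - ub)))\<^sup>2 / 2"
        unfolding g_def by (simp add: algebra_simps)
      also have "\<dots> = (1 - l) * tb + l * inner a b + ((norm xb)\<^sup>2 + 2 * l * inner xb (a - xb) + l^2 * (norm (a - xb))\<^sup>2) / 2
          + ((norm ub)\<^sup>2 + 2 * l * inner ub (b - ub) + l^2 * (norm (b - ub))\<^sup>2) / 2"
        by (simp only: norm_add_scale)
      finally have m1: "m \<le> (1 - l) * tb + l * inner a b + ((norm xb)\<^sup>2 + 2 * l * inner xb (a - xb) + l^2 * (norm (a - xb))\<^sup>2) / 2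
          + ((norm ub)\<^sup>2 + 2 * l * inner ub (b - ub) + l^2 * (norm (b - ub))\<^sup>2) / 2" .
      have e1: "((norm xb)\<^sup>2 + 2 * l * inner xb (a - xb) + l^2 * (norm (a - xb))\<^sup>2) / 2
          = (norm xb)\<^sup>2 / 2 + l * inner xb (a - xb) + l * (l * (norm (a - xb))\<^sup>2 / 2)"
        by (simp add: field_simps power2_eq_square)
      have e2: "((norm ub)\<^sup>2 + 2 * l * inner ub (b - ub) + l^2 * (norm (b - ub))\<^sup>2) / 2
          = (norm ub)\<^sup>2 / 2 + l * inner ub (b - ub) + l * (l * (norm (b - ub))\<^sup>2 / 2)"
        by (simp add: field_simps power2_eq_square)
      have e3: "(1 - l) * tb = tb - l * tb" by (simp add: algebra_simps)
      have e4: "l * (inner a b + inner xb (a - xb) + inner ub (b - ub) + l * K)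
          = l * inner a b + l * inner xb (a - xb) + l * inner ub (b - ub) + l * (l * (norm (a - xb))\<^sup>2 / 2) + l * (l * (norm (b - ub))\<^sup>2 / 2)"
        unfolding K_def by (simp add: field_simps)
      have "l * tb \<le> l * (inner a b + inner xb (a - xb) + inner ub (b - ub) + l * K)"
        using m1 gb e1 e2 e3 e4 unfolding g_def by linarith
      then show "tb \<le> inner a b + inner xb (a - xb) + inner ub (b - ub) + l * K"
        using l by simp
    qed
    moreover have "inner xb ub \<le> tb" by (rule E_ge[OF Eb])
    moreover have "inner (a + ub) (b + xb) - (norm (xb + ub))\<^sup>2 = (inner a b + inner xb (a - xb) + inner ub (b - ub)) - inner xb ub"
      unfolding power2_norm_eq_inner by (simp add: inner_add_left inner_add_right inner_diff_left inner_diff_right inner_commute algebra_simps)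
    ultimately show ?thesis by linarith
  qed
  have inB: "- xb \<in> B (- ub)"
  proof (rule maxl)
    fix a b assume ab: "b \<in> B a"
    have "inner (- xb - b) (- ub - a) = inner (a + ub) (b + xb)"
      by (simp add: inner_add_left inner_add_right inner_diff_left inner_diff_right inner_commute algebra_simps)
    also have "\<dots> \<ge> (norm (xb + ub))\<^sup>2" by (rule key[OF ab])
    finally have "inner (- xb - b) (- ub - a) \<ge> (norm (xb + ub))\<^sup>2" .
    then show "inner (- xb - b) (- ub - a) \<ge> 0" using zero_le_power2[of "norm (xb + ub)"] by linarith
  qed
  from key[OF inB] have "(norm (xb + ub))\<^sup>2 \<le> 0" by simp
  then have "norm (xb + ub) = 0" by simp
  then have "xb + ub = 0" by simp
  then have "ub = - xb" using add_eq_0_iff by blast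
  then show ?thesis using inB by auto
qed

lemma mm_mono:
  assumes "maximal_monotone B" "b \<in> B a" "b' \<in> B a'"
  shows "inner (b - b') (a - a') \<ge> 0"
  using assms unfolding maximal_monotone_def monotone_op_def by blast

lemma mm_max:
  fixes B :: "'a::real_inner \<Rightarrow> 'a set"
  assumes mm: "maximal_monotone B" and h: "\<And>a b. b \<in> B a \<Longrightarrow> inner (u - b) (x - a) \<ge> 0"
  shows "u \<in> B x"
proof -
  define C where "C = (\<lambda>y. if y = x then insert u (B x) else B y)"
  have "monotone_op C" unfolding monotone_op_def
  proof (intro allI impI)
    fix p q v w assume v: "v \<in> C p" and w: "w \<in> C q"
    have h': "inner (b - u) (a - x) \<ge> 0" if "b \<in> B a" for a b
      using h[OF that] by (simp add: inner_diff_left inner_diff_right inner_commute algebra_simps)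
    have uu: "inner (u - u) (x - x) \<ge> 0" by simp
    show "inner (v - w) (p - q) \<ge> 0"
      using v w mm_mono[OF mm] h h' uu unfolding C_def
      by (auto split: if_splits)
  qed
  moreover have "\<forall>y. B y \<subseteq> C y" unfolding C_def by auto
  ultimately have "C = B" using mm unfolding maximal_monotone_def by blast
  moreover have "u \<in> C x" unfolding C_def by simp
  ultimately show ?thesis by simp
qed

lemma resolvent_exists:
  fixes B :: "'a::{real_inner,complete_space} \<Rightarrow> 'a set"
  assumes mm: "maximal_monotone B" and g: "\<gamma> > 0"
  shows "\<exists>x. (1 / \<gamma>) *\<^sub>R (z - x) \<in> B x"
proof -
  define C where "C = (\<lambda>y. (\<lambda>b. \<gamma> *\<^sub>R b) ` B (y + z))"
  have "\<exists>p. - p \<in> C p"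
  proof (rule minty_core)
    fix a b a' b' assume "b \<in> C a" "b' \<in> C a'"
    then obtain c c' where c: "c \<in> B (a + z)" "b = \<gamma> *\<^sub>R c" "c' \<in> B (a' + z)" "b' = \<gamma> *\<^sub>R c'"
      unfolding C_def by auto
    have "inner (c - c') ((a + z) - (a' + z)) \<ge> 0" by (rule mm_mono[OF mm c(1) c(3)])
    then have "\<gamma> * inner (c - c') (a - a') \<ge> 0" using g by simp
    then show "inner (b - b') (a - a') \<ge> 0" using c by (simp add: inner_diff_left inner_diff_right algebra_simps)
  next
    fix x u assume h: "\<And>a b. b \<in> C a \<Longrightarrow> inner (u - b) (x - a) \<ge> 0"
    have "(1 / \<gamma>) *\<^sub>R u \<in> B (x + z)"
    proof (rule mm_max[OF mm])
      fix a b assume b: "b \<in> B a"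
      have "\<gamma> *\<^sub>R b \<in> C (a - z)" unfolding C_def using b by auto
      from h[OF this] have "inner (u - \<gamma> *\<^sub>R b) (x - (a - z)) \<ge> 0" .
      moreover have "inner (u - \<gamma> *\<^sub>R b) (x - (a - z)) = \<gamma> * inner ((1 / \<gamma>) *\<^sub>R u - b) (x + z - a)"
        using g by (simp add: inner_diff_left inner_diff_right algebra_simps)
      ultimately show "inner ((1 / \<gamma>) *\<^sub>R u - b) (x + z - a) \<ge> 0"
        using g by (simp add: zero_le_mult_iff)
    qed
    then have "\<gamma> *\<^sub>R ((1 / \<gamma>) *\<^sub>R u) \<in> C x" unfolding C_def by blast
    then show "u \<in> C x" using g by simp
  qed
  then obtain p where p: "- p \<in> C p" by blast
  then obtain b where b: "b \<in> B (p + z)" "- p = \<gamma> *\<^sub>R b" unfolding C_def by auto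
  have "(1 / \<gamma>) *\<^sub>R (z - (p + z)) = b" using b(2) g
    by (simp add: algebra_simps)
  then show ?thesis using b(1) by (intro exI[of _ "p + z"]) simp
qed

lemma res_pred_iff:
  fixes B :: "'a::real_vector \<Rightarrow> 'a set"
  assumes g: "\<gamma> > 0"
  shows "z \<in> (\<lambda>b. x + \<gamma> *\<^sub>R b) ` B x \<longleftrightarrow> (1 / \<gamma>) *\<^sub>R (z - x) \<in> B x"
proof
  assume "z \<in> (\<lambda>b. x + \<gamma> *\<^sub>R b) ` B x"
  then obtain b where "b \<in> B x" "z = x + \<gamma> *\<^sub>R b" by auto
  then show "(1 / \<gamma>) *\<^sub>R (z - x) \<in> B x" using g by simp
next
  assume h: "(1 / \<gamma>) *\<^sub>R (z - x) \<in> B x"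
  have "z = x + \<gamma> *\<^sub>R ((1 / \<gamma>) *\<^sub>R (z - x))" using g by simp
  then show "z \<in> (\<lambda>b. x + \<gamma> *\<^sub>R b) ` B x" using h by blast
qed

lemma res_unique:
  fixes B :: "'a::real_inner \<Rightarrow> 'a set"
  assumes mm: "maximal_monotone B" and g: "\<gamma> > 0"
    and h1: "(1 / \<gamma>) *\<^sub>R (z - x) \<in> B x" and h2: "(1 / \<gamma>) *\<^sub>R (z - x') \<in> B x'"
  shows "x = x'"
proof -
  have "inner ((1 / \<gamma>) *\<^sub>R (z - x) - (1 / \<gamma>) *\<^sub>R (z - x')) (x - x') \<ge> 0"
    by (rule mm_mono[OF mm h1 h2])
  moreover have "(1 / \<gamma>) *\<^sub>R (z - x) - (1 / \<gamma>) *\<^sub>R (z - x') = - ((1 / \<gamma>) *\<^sub>R (x - x'))"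
    by (simp add: algebra_simps)
  ultimately have "- ((1 / \<gamma>) * inner (x - x') (x - x')) \<ge> 0" by simp
  then have "inner (x - x') (x - x') / \<gamma> \<le> 0" by simp
  then have "inner (x - x') (x - x') \<le> 0" using g by (simp add: divide_le_0_iff)
  then have "inner (x - x') (x - x') = 0" using inner_ge_zero[of "x - x'"] by linarith
  then show ?thesis by simp
qed

lemma resolvent_char:
  fixes B :: "'a::{real_inner,complete_space} \<Rightarrow> 'a set"
  assumes mm: "maximal_monotone B" and g: "\<gamma> > 0"
  shows "(1 / \<gamma>) *\<^sub>R (z - resolvent \<gamma> B z) \<in> B (resolvent \<gamma> B z)"
proof -
  obtain x where x: "(1 / \<gamma>) *\<^sub>R (z - x) \<in> B x" using resolvent_exists[OF mm g] by blast
  have "\<exists>!x. z \<in> (\<lambda>b. x + \<gamma> *\<^sub>R b) ` B x"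
    unfolding res_pred_iff[OF g] using x res_unique[OF mm g] by blast
  then have "z \<in> (\<lambda>b. resolvent \<gamma> B z + \<gamma> *\<^sub>R b) ` B (resolvent \<gamma> B z)"
    unfolding resolvent_def by (rule theI')
  then show ?thesis unfolding res_pred_iff[OF g] .
qed

lemma resolvent_eq:
  fixes B :: "'a::{real_inner,complete_space} \<Rightarrow> 'a set"
  assumes mm: "maximal_monotone B" and g: "\<gamma> > 0" and h: "(1 / \<gamma>) *\<^sub>R (z - x) \<in> B x"
  shows "resolvent \<gamma> B z = x"
  using res_unique[OF mm g resolvent_char[OF mm g] h] .

lemma uc_growth:
  fixes f :: "'a::real_normed_vector \<Rightarrow> 'b::real_normed_vector"
  assumes uc: "uniformly_continuous_on UNIV f"
  shows "\<exists>C>0. \<forall>p q. norm (f p - f q) \<le> C * (1 + norm (p - q))"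
proof -
  obtain \<eta> where eta: "\<eta> > 0" and h: "\<And>x x'. dist x' x < \<eta> \<Longrightarrow> dist (f x') (f x) < 1"
    using uc unfolding uniformly_continuous_on_def by (metis UNIV_I zero_less_one)
  have claim: "\<forall>(p::'a) (q::'a). norm (p - q) \<le> real n * (\<eta> / 2) \<longrightarrow> norm (f p - f q) \<le> real n" for n
  proof (induction n)
    case 0
    then show ?case by simp
  next
    case (Suc n)
    show ?case
    proof (intro allI impI)
      fix p q :: 'a assume pq: "norm (p - q) \<le> real (Suc n) * (\<eta> / 2)"
      show "norm (f p - f q) \<le> real (Suc n)"
      proof (cases "norm (p - q) \<le> \<eta> / 2")
        case True
        then have "dist p q < \<eta>" using eta by (simp add: dist_norm)
        then have "norm (f p - f q) < 1" using h[of p q] by (simp add: dist_norm)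
        then show ?thesis by simp
      next
        case False
        define s where "s = (\<eta> / 2) / norm (p - q)"
        have npq: "norm (p - q) > 0" using False eta by linarith
        have s: "0 < s" "s < 1" using False eta npq unfolding s_def by (auto simp: field_simps)
        define r where "r = p + s *\<^sub>R (q - p)"
        have "norm (p - r) = s * norm (p - q)" unfolding r_def using s by (simp add: norm_minus_commute)
        also have "\<dots> = \<eta> / 2" unfolding s_def using npq by simp
        finally have "dist p r < \<eta>" using eta by (simp add: dist_norm)
        then have d1: "norm (f p - f r) < 1" using h[of p r] by (simp add: dist_norm)
        have "r - q = (1 - s) *\<^sub>R (p - q)" unfolding r_def by (simp add: algebra_simps)
        then have "norm (r - q) = (1 - s) * norm (p - q)" using s by simp
        also have "\<dots> = norm (p - q) - \<eta> / 2" unfolding s_def using npq by (simp add: algebra_simps)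
        also have "\<dots> \<le> real n * (\<eta> / 2)" using pq by (simp add: algebra_simps)
        finally have d2: "norm (f r - f q) \<le> real n" using Suc.IH by blast
        have "norm (f p - f q) \<le> norm (f p - f r) + norm (f r - f q)" by (rule norm_diff_triangle_le[of _ "f r"]) simp_all
        then show ?thesis using d1 d2 by simp
      qed
    qed
  qed
  define C where "C = max 1 (2 / \<eta>)"
  have C: "C > 0" unfolding C_def by simp
  have "norm (f p - f q) \<le> C * (1 + norm (p - q))" for p q
  proof -
    define n where "n = nat \<lceil>norm (p - q) / (\<eta> / 2)\<rceil>"
    have n1: "norm (p - q) / (\<eta> / 2) \<le> real n" unfolding n_def by linarith
    have n2: "real n < norm (p - q) / (\<eta> / 2) + 1" unfolding n_def
      using norm_ge_zero[of "p - q"] eta by (simp add: nat_less_iff) linarith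
    have "norm (p - q) \<le> real n * (\<eta> / 2)" using n1 eta by (simp add: field_simps)
    then have "norm (f p - f q) \<le> real n" using claim by blast
    also have "\<dots> \<le> (2 / \<eta>) * norm (p - q) + 1" using n2 eta by (simp add: field_simps)
    also have "\<dots> \<le> C * norm (p - q) + C * 1"
      unfolding C_def by (intro add_mono mult_right_mono) auto
    finally show ?thesis by (simp add: algebra_simps)
  qed
  then show ?thesis using C by blast
qed

lemma linesearch_terminates:
  fixes A A2 :: "'a::{real_inner,complete_space} \<Rightarrow> 'a" and B :: "'a \<Rightarrow> 'a set"
  assumes mm: "maximal_monotone B" and uc: "uniformly_continuous_on UNIV A2"
    and ap: "ap > 0" and th: "0 < \<theta>" "\<theta> < 1" and de: "\<delta> > 0"
  shows "\<exists>j. ap * \<theta> ^ j * inner (A2 x - A2 (resolvent (ap * \<theta> ^ j) B (x - (ap * \<theta> ^ j) *\<^sub>R A x)))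
                 (x - resolvent (ap * \<theta> ^ j) B (x - (ap * \<theta> ^ j) *\<^sub>R A x))
          \<le> \<delta> * (norm (x - resolvent (ap * \<theta> ^ j) B (x - (ap * \<theta> ^ j) *\<^sub>R A x)))\<^sup>2"
proof (rule ccontr)
  define \<gamma> where "\<gamma> j = ap * \<theta> ^ j" for j :: nat
  define y where "y j = resolvent (\<gamma> j) B (x - \<gamma> j *\<^sub>R A x)" for j
  define d where "d j = norm (x - y j)" for j
  assume "\<not> ?thesis"
  then have nc: "\<gamma> j * inner (A2 x - A2 (y j)) (x - y j) > \<delta> * (d j)\<^sup>2" for j
    unfolding \<gamma>_def y_def d_def by (simp add: not_le)
  have gpos: "\<gamma> j > 0" for j unfolding \<gamma>_def using ap th by simp
  have glim: "\<gamma> \<longlonglongrightarrow> 0"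
    unfolding \<gamma>_def using th by (auto intro!: tendsto_mult_right_zero LIMSEQ_power_zero)
  have vB: "(1 / \<gamma> j) *\<^sub>R ((x - \<gamma> j *\<^sub>R A x) - y j) \<in> B (y j)" for j
    unfolding y_def by (rule resolvent_char[OF mm gpos])
  have vform: "(1 / \<gamma> j) *\<^sub>R ((x - \<gamma> j *\<^sub>R A x) - y j) = (1 / \<gamma> j) *\<^sub>R (x - y j) - A x" for j
    using gpos[of j] by (simp add: algebra_simps)
  obtain C where C: "C > 0" "\<And>p q. norm (A2 p - A2 q) \<le> C * (1 + norm (p - q))"
    using uc_growth[OF uc] by blast
  have key: "d j > 0 \<and> \<delta> * d j < \<gamma> j * norm (A2 x - A2 (y j))" for j
  proof -
    have "\<gamma> j * inner (A2 x - A2 (y j)) (x - y j) \<le> \<gamma> j * (norm (A2 x - A2 (y j)) * d j)"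
      unfolding d_def using gpos[of j] by (intro mult_left_mono norm_cauchy_schwarz) auto
    then have lt: "\<delta> * (d j)\<^sup>2 < \<gamma> j * norm (A2 x - A2 (y j)) * d j" using nc[of j] by simp
    have dnn: "d j \<ge> 0" unfolding d_def by simp
    have dpos: "d j > 0"
    proof (rule ccontr)
      assume "\<not> d j > 0" then have "d j = 0" using dnn by simp
      then show False using lt by simp
    qed
    have "d j * (\<delta> * d j) < d j * (\<gamma> j * norm (A2 x - A2 (y j)))"
      using lt by (simp add: power2_eq_square algebra_simps)
    then show ?thesis using dpos by simp
  qed
  have dlim: "d \<longlonglongrightarrow> 0"
  proof (rule real_tendsto_sandwich[where f="\<lambda>j. 0" and h="\<lambda>j. (2 * C / \<delta>) * \<gamma> j"])
    show "\<forall>\<^sub>F j in sequentially. 0 \<le> d j" unfolding d_def by simp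
    have "\<forall>\<^sub>F j in sequentially. \<gamma> j < \<delta> / (2 * C)"
      using order_tendstoD(2)[OF glim] de C by simp
    then show "\<forall>\<^sub>F j in sequentially. d j \<le> (2 * C / \<delta>) * \<gamma> j"
    proof (rule eventually_mono)
      fix j assume gj: "\<gamma> j < \<delta> / (2 * C)"
      have "\<delta> * d j < \<gamma> j * (C * (1 + d j))"
        using key[of j] C(2)[of x "y j"] gpos[of j] unfolding d_def
        by (smt (verit) mult_left_mono)
      moreover have "\<gamma> j * C < \<delta> / 2" using gj C by (simp add: field_simps)
      moreover have "d j \<ge> 0" unfolding d_def by simp
      ultimately have "\<delta> * d j < \<gamma> j * C + (\<delta> / 2) * d j"
        by (smt (verit, best) distrib_left mult.assoc mult.commute mult_right_mono mult_cancel_right1)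
      then have "d j * \<delta> < 2 * C * \<gamma> j" by (simp add: algebra_simps)
      then show "d j \<le> (2 * C / \<delta>) * \<gamma> j" using de by (simp add: field_simps)
    qed
    show "(\<lambda>j. 0) \<longlonglongrightarrow> (0::real)" by simp
    show "(\<lambda>j. (2 * C / \<delta>) * \<gamma> j) \<longlonglongrightarrow> 0" by (rule tendsto_mult_right_zero[OF glim])
  qed
  have ylim: "y \<longlonglongrightarrow> x"
  proof -
    have "(\<lambda>j. x - y j) \<longlonglongrightarrow> 0" using dlim unfolding d_def tendsto_norm_zero_iff .
    then have "(\<lambda>j. x - (x - y j)) \<longlonglongrightarrow> x - 0" by (intro tendsto_intros)
    then show ?thesis by simp
  qed
  have A2cont: "isCont A2 x"
    using uniformly_continuous_imp_continuous[OF uc] by (simp add: continuous_on_eq_continuous_at)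
  have A2lim: "(\<lambda>j. norm (A2 x - A2 (y j))) \<longlonglongrightarrow> 0"
  proof -
    have "(\<lambda>j. A2 (y j)) \<longlonglongrightarrow> A2 x" using isCont_tendsto_compose[OF A2cont ylim] .
    then have "(\<lambda>j. A2 x - A2 (y j)) \<longlonglongrightarrow> A2 x - A2 x" by (intro tendsto_intros)
    then show ?thesis using tendsto_norm_zero_iff by fastforce
  qed
  have wlim: "(\<lambda>j. (1 / \<gamma> j) *\<^sub>R (x - y j)) \<longlonglongrightarrow> 0"
  proof (rule Lim_null_comparison)
    show "\<forall>\<^sub>F j in sequentially. norm ((1 / \<gamma> j) *\<^sub>R (x - y j)) \<le> norm (A2 x - A2 (y j)) / \<delta>"
    proof (rule always_eventually, rule allI)
      fix j
      have "\<delta> * d j < \<gamma> j * norm (A2 x - A2 (y j))" using key by blast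
      then have "d j / \<gamma> j \<le> norm (A2 x - A2 (y j)) / \<delta>"
        using gpos[of j] de by (simp add: field_simps)
      then show "norm ((1 / \<gamma> j) *\<^sub>R (x - y j)) \<le> norm (A2 x - A2 (y j)) / \<delta>"
        using gpos[of j] unfolding d_def by simp
    qed
    show "(\<lambda>j. norm (A2 x - A2 (y j)) / \<delta>) \<longlonglongrightarrow> 0"
      using tendsto_divide[OF A2lim tendsto_const, of \<delta>] de by simp
  qed
  have vlim: "(\<lambda>j. (1 / \<gamma> j) *\<^sub>R (x - y j) - A x) \<longlonglongrightarrow> 0 - A x"
    by (intro tendsto_intros wlim)
  have zero: "- A x \<in> B x"
  proof (rule mm_max[OF mm])
    fix a b assume b: "b \<in> B a"
    have "inner ((1 / \<gamma> j) *\<^sub>R (x - y j) - A x - b) (y j - a) \<ge> 0" for j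
      using mm_mono[OF mm vB[of j] b] unfolding vform .
    moreover have "(\<lambda>j. inner ((1 / \<gamma> j) *\<^sub>R (x - y j) - A x - b) (y j - a)) \<longlonglongrightarrow> inner (0 - A x - b) (x - a)"
      by (intro tendsto_intros vlim ylim)
    ultimately have "0 \<le> inner (0 - A x - b) (x - a)"
      by (intro LIMSEQ_le_const) auto
    then show "inner (- A x - b) (x - a) \<ge> 0" by simp
  qed
  have "y 0 = x" unfolding y_def
  proof (rule resolvent_eq[OF mm gpos])
    show "(1 / \<gamma> 0) *\<^sub>R (x - \<gamma> 0 *\<^sub>R A x - x) \<in> B x" using zero gpos[of 0] by simp
  qed
  then show False using key[of 0] unfolding d_def by simp
qed

lemma sol_in_T:
  fixes A1 A2 :: "'a::{real_inner,complete_space} \<Rightarrow> 'a" and B :: "'a \<Rightarrow> 'a set"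
  assumes mm: "maximal_monotone B" and mA2: "maximal_monotone (sv A2)"
    and coc: "cocoercive \<beta> A1" and be: "\<beta> > 0" and al: "\<alpha> > 0" "\<alpha> \<le> 4 * \<beta> * db"
    and xs: "- (A1 xs + A2 xs) \<in> B xs"
    and xb: "xb = resolvent \<alpha> B (x - \<alpha> *\<^sub>R (A1 x + A2 x))"
  shows "inner ((1 / \<alpha>) *\<^sub>R (x - xb) - (A2 x - A2 xb)) (xs - xb) \<le> db / \<alpha> * (norm (x - xb))\<^sup>2"
proof -
  define v where "v = (1 / \<alpha>) *\<^sub>R ((x - \<alpha> *\<^sub>R (A1 x + A2 x)) - xb)"
  have vB: "v \<in> B xb" unfolding v_def xb by (rule resolvent_char[OF mm al(1)])
  have vf: "(1 / \<alpha>) *\<^sub>R (x - xb) - (A2 x - A2 xb) = (v + A1 xs + A2 xs) + (A2 xb - A2 xs) + (A1 x - A1 xs)"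
    unfolding v_def using al(1) by (simp add: algebra_simps)
  have m1: "inner (v + A1 xs + A2 xs) (xb - xs) \<ge> 0"
    using mm_mono[OF mm vB xs] by (simp add: algebra_simps)
  have m2: "inner (A2 xb - A2 xs) (xb - xs) \<ge> 0"
    using mA2 unfolding maximal_monotone_def monotone_op_def sv_def by blast
  define a where "a = A1 x - A1 xs"
  define D where "D = norm (x - xb)"
  define t where "t = norm a"
  have c1: "inner a (x - xs) \<ge> \<beta> * t\<^sup>2" using coc unfolding cocoercive_def a_def t_def by blast
  have c2: "inner a (x - xb) \<le> t * D" unfolding t_def D_def by (rule norm_cauchy_schwarz)
  have split: "inner ((1 / \<alpha>) *\<^sub>R (x - xb) - (A2 x - A2 xb)) (xs - xb)
      = - inner (v + A1 xs + A2 xs) (xb - xs) - inner (A2 xb - A2 xs) (xb - xs) - inner a (x - xs) + inner a (x - xb)"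
    unfolding vf a_def by (simp add: inner_add_left inner_diff_right inner_diff_left algebra_simps)
  have "inner ((1 / \<alpha>) *\<^sub>R (x - xb) - (A2 x - A2 xb)) (xs - xb) \<le> t * D - \<beta> * t\<^sup>2"
    using split m1 m2 c1 c2 by linarith
  also have "\<dots> \<le> D\<^sup>2 / (4 * \<beta>)"
  proof -
    have "0 \<le> \<beta> * (t - D / (2 * \<beta>))\<^sup>2" using be by simp
    also have "\<beta> * (t - D / (2 * \<beta>))\<^sup>2 = \<beta> * t\<^sup>2 - t * D + D\<^sup>2 / (4 * \<beta>)"
      using be by (simp add: power2_eq_square field_simps)
    finally show ?thesis by simp
  qed
  also have "\<dots> \<le> db / \<alpha> * D\<^sup>2"
  proof -
    have "1 / (4 * \<beta>) \<le> db / \<alpha>" using al be by (simp add: field_simps)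
    then have "1 / (4 * \<beta>) * D\<^sup>2 \<le> db / \<alpha> * D\<^sup>2" by (rule mult_right_mono) simp
    then show ?thesis by simp
  qed
  finally show ?thesis unfolding D_def .
qed

lemma halfspace_shift:
  fixes c w :: "'a::real_inner"
  shows "{z. inner c (z - w) \<le> r} = {z. inner c z \<le> r + inner c w}"
  by (auto simp: inner_diff_right)

lemma halfspace_cc:
  fixes c w :: "'a::real_inner"
  shows "closed {z. inner c (z - w) \<le> r}" "convex {z. inner c (z - w) \<le> r}"
  unfolding halfspace_shift by (rule closed_halfspace_le, rule convex_halfspace_le)

theorem corollary4p12:
  fixes A1 A2 :: "'a::{real_inner, complete_space} \<Rightarrow> 'a"
    and B :: "'a \<Rightarrow> 'a set"
    and \<beta> \<theta> \<delta> \<delta>bar \<alpha>m1 :: real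
    and x0 :: 'a
  assumes "\<beta> > 0" and "cocoercive \<beta> A1"
    and "maximal_monotone (sv A2)" and "uniformly_continuous_on UNIV A2"
    and "maximal_monotone B"
    and "\<exists>x. (0::'a) \<in> (\<lambda>b. A1 x + A2 x + b) ` B x"
    and "0 < \<theta>" "\<theta> < 1" "0 < \<delta>" "\<delta> < 1" "\<delta>bar > 0" "1 - \<delta> - \<delta>bar > 0"
    and "\<alpha>m1 > 0" "\<alpha>m1 \<le> 4 * \<beta> * \<delta>bar"
  shows "\<exists>(x :: nat \<Rightarrow> 'a) (\<alpha> :: nat \<Rightarrow> real). x 0 = x0 \<and>
    (\<forall>k. let
        A = (\<lambda>z. A1 z + A2 z);
        \<alpha>prev = (if k = 0 then \<alpha>m1 else \<alpha> (k - 1));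
        xbj = (\<lambda>j::nat. resolvent (\<alpha>prev * \<theta> ^ j) B (x k - (\<alpha>prev * \<theta> ^ j) *\<^sub>R A (x k)));
        cond = (\<lambda>j::nat. \<alpha>prev * \<theta> ^ j * inner (A2 (x k) - A2 (xbj j)) (x k - xbj j)
                          \<le> \<delta> * (norm (x k - xbj j))\<^sup>2);
        xb = resolvent (\<alpha> k) B (x k - \<alpha> k *\<^sub>R A (x k));
        r = \<delta>bar / \<alpha> k * (norm (x k - xb))\<^sup>2;
        T = {z. inner ((1 / \<alpha> k) *\<^sub>R (x k - xb) - (A2 (x k) - A2 xb)) (z - xb) \<le> r};
        \<Gamma> = {z. inner (x0 - x k) (z - x k) \<le> 0}
      in (\<exists>j. cond j) \<and> \<alpha> k = \<alpha>prev * \<theta> ^ (LEAST j. cond j) \<and>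
         T \<inter> \<Gamma> \<noteq> {} \<and> is_proj (T \<inter> \<Gamma>) x0 (x (Suc k)))"
proof -
  obtain xs where "0 \<in> (\<lambda>b. A1 xs + A2 xs + b) ` B xs" using assms(6) by blast
  then have xs: "- (A1 xs + A2 xs) \<in> B xs"
    by (auto simp: add_eq_0_iff)
  define R where "R ap xk j = resolvent (ap * \<theta> ^ j) B (xk - (ap * \<theta> ^ j) *\<^sub>R (A1 xk + A2 xk))"
    for ap :: real and xk :: 'a and j :: nat
  define cnd where "cnd ap xk j \<longleftrightarrow> ap * \<theta> ^ j * inner (A2 xk - A2 (R ap xk j)) (xk - R ap xk j)
      \<le> \<delta> * (norm (xk - R ap xk j))\<^sup>2" for ap xk j
  define anew where "anew ap xk = ap * \<theta> ^ (LEAST j. cnd ap xk j)" for ap xk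
  define xbf where "xbf a xk = resolvent a B (xk - a *\<^sub>R (A1 xk + A2 xk))" for a xk
  define Tset where "Tset a xk = {z. inner ((1 / a) *\<^sub>R (xk - xbf a xk) - (A2 xk - A2 (xbf a xk))) (z - xbf a xk)
      \<le> \<delta>bar / a * (norm (xk - xbf a xk))\<^sup>2}" for a xk
  define Gset where "Gset xk = {z. inner (x0 - xk) (z - xk) \<le> 0}" for xk
  define nxt where "nxt ap xk = (SOME p. is_proj (Tset (anew ap xk) xk \<inter> Gset xk) x0 p, anew ap xk)" for ap xk
  define st where "st = rec_nat (x0, \<alpha>m1) (\<lambda>_ p. nxt (snd p) (fst p))"
  define x where "x k = fst (st k)" for k
  define \<alpha> where "\<alpha> k = snd (st (Suc k))" for k
  define ap where "ap k = snd (st k)" for k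
  have st0: "st 0 = (x0, \<alpha>m1)" unfolding st_def by simp
  have stS: "st (Suc k) = nxt (ap k) (x k)" for k unfolding st_def ap_def x_def by simp
  have x0': "x 0 = x0" unfolding x_def st0 by simp
  have ap0: "ap 0 = \<alpha>m1" unfolding ap_def st0 by simp
  have apS: "ap (Suc k) = \<alpha> k" for k unfolding ap_def \<alpha>_def by simp
  have apk: "ap k = (if k = 0 then \<alpha>m1 else \<alpha> (k - 1))" for k
    by (cases k) (simp_all add: ap0 apS)
  have alk: "\<alpha> k = anew (ap k) (x k)" for k unfolding \<alpha>_def stS nxt_def by simp
  have xS: "x (Suc k) = (SOME p. is_proj (Tset (\<alpha> k) (x k) \<inter> Gset (x k)) x0 p)" for k
    unfolding x_def stS nxt_def alk by simp
  have mm: "maximal_monotone B" by (rule assms(5))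
  have mA2: "maximal_monotone (sv A2)" by (rule assms(3))
  have step: "(\<exists>j. cnd (ap k) (x k) j) \<and> 0 < \<alpha> k \<and> \<alpha> k \<le> \<alpha>m1 \<and> xs \<in> Tset (\<alpha> k) (x k) \<and>
      Tset (\<alpha> k) (x k) \<inter> Gset (x k) \<noteq> {} \<and> is_proj (Tset (\<alpha> k) (x k) \<inter> Gset (x k)) x0 (x (Suc k))"
    if I: "0 < ap k" "ap k \<le> \<alpha>m1" "xs \<in> Gset (x k)" for k
  proof -
    have ex: "\<exists>j. cnd (ap k) (x k) j"
      unfolding cnd_def R_def
      by (rule linesearch_terminates[OF mm assms(4) I(1) assms(7,8,9)])
    have tpos: "0 < \<theta> ^ (LEAST j. cnd (ap k) (x k) j)" using assms(7) by simp
    have tle: "\<theta> ^ (LEAST j. cnd (ap k) (x k) j) \<le> 1" using assms(7,8) by (simp add: power_le_one)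
    have apos: "0 < \<alpha> k" unfolding alk anew_def using I(1) tpos by simp
    have ale: "\<alpha> k \<le> ap k" unfolding alk anew_def using I(1) tle
      by (simp add: mult_left_le)
    then have ale1: "\<alpha> k \<le> \<alpha>m1" using I(2) by simp
    have ale2: "\<alpha> k \<le> 4 * \<beta> * \<delta>bar" using ale1 assms(14) by simp
    have xsT: "xs \<in> Tset (\<alpha> k) (x k)"
      unfolding Tset_def xbf_def
      using sol_in_T[OF mm mA2 assms(2) assms(1) apos ale2 xs refl] by simp
    define Cs where "Cs = Tset (\<alpha> k) (x k) \<inter> Gset (x k)"
    have Cne: "Cs \<noteq> {}" using xsT I(3) unfolding Cs_def by blast
    have Ccl: "closed Cs" unfolding Cs_def Tset_def Gset_def
      by (intro closed_Int halfspace_cc)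
    have Ccv: "convex Cs" unfolding Cs_def Tset_def Gset_def
      by (intro convex_Int halfspace_cc)
    obtain p where "is_proj Cs x0 p" using proj_exists[OF Ccl Ccv Cne] by blast
    then have "is_proj Cs x0 (x (Suc k))" unfolding xS Cs_def[symmetric] by (rule someI)
    then show ?thesis using ex apos ale1 xsT Cne unfolding Cs_def by blast
  qed
  have inv: "0 < ap k \<and> ap k \<le> \<alpha>m1 \<and> xs \<in> Gset (x k)" for k
  proof (induction k)
    case 0
    then show ?case using ap0 x0' assms(13) unfolding Gset_def by simp
  next
    case (Suc k)
    then have s: "(\<exists>j. cnd (ap k) (x k) j) \<and> 0 < \<alpha> k \<and> \<alpha> k \<le> \<alpha>m1 \<and> xs \<in> Tset (\<alpha> k) (x k) \<and>
      Tset (\<alpha> k) (x k) \<inter> Gset (x k) \<noteq> {} \<and> is_proj (Tset (\<alpha> k) (x k) \<inter> Gset (x k)) x0 (x (Suc k))"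
      using step by blast
    have cv: "convex (Tset (\<alpha> k) (x k) \<inter> Gset (x k))" unfolding Tset_def Gset_def
      by (intro convex_Int halfspace_cc)
    have "xs \<in> Tset (\<alpha> k) (x k) \<inter> Gset (x k)" using s Suc.IH by blast
    from proj_char[OF conjunct2[OF conjunct2[OF conjunct2[OF conjunct2[OF conjunct2[OF s]]]]] cv this]
    have "xs \<in> Gset (x (Suc k))" unfolding Gset_def by simp
    then show ?case using s apS by simp
  qed
  show ?thesis
  proof (intro exI conjI allI)
    show "x 0 = x0" by (rule x0')
    fix k
    have s: "(\<exists>j. cnd (ap k) (x k) j) \<and> 0 < \<alpha> k \<and> \<alpha> k \<le> \<alpha>m1 \<and> xs \<in> Tset (\<alpha> k) (x k) \<and>
      Tset (\<alpha> k) (x k) \<inter> Gset (x k) \<noteq> {} \<and> is_proj (Tset (\<alpha> k) (x k) \<inter> Gset (x k)) x0 (x (Suc k))"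
      using step inv by blast
    show "let
        A = (\<lambda>z. A1 z + A2 z);
        \<alpha>prev = (if k = 0 then \<alpha>m1 else \<alpha> (k - 1));
        xbj = (\<lambda>j::nat. resolvent (\<alpha>prev * \<theta> ^ j) B (x k - (\<alpha>prev * \<theta> ^ j) *\<^sub>R A (x k)));
        cond = (\<lambda>j::nat. \<alpha>prev * \<theta> ^ j * inner (A2 (x k) - A2 (xbj j)) (x k - xbj j)
                          \<le> \<delta> * (norm (x k - xbj j))\<^sup>2);
        xb = resolvent (\<alpha> k) B (x k - \<alpha> k *\<^sub>R A (x k));
        r = \<delta>bar / \<alpha> k * (norm (x k - xb))\<^sup>2;
        T = {z. inner ((1 / \<alpha> k) *\<^sub>R (x k - xb) - (A2 (x k) - A2 xb)) (z - xb) \<le> r};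
        \<Gamma> = {z. inner (x0 - x k) (z - x k) \<le> 0}
      in (\<exists>j. cond j) \<and> \<alpha> k = \<alpha>prev * \<theta> ^ (LEAST j. cond j) \<and>
         T \<inter> \<Gamma> \<noteq> {} \<and> is_proj (T \<inter> \<Gamma>) x0 (x (Suc k))"
      using s alk[of k] unfolding Let_def apk[symmetric] cnd_def R_def anew_def Tset_def Gset_def xbf_def
      by simp
  qed
qed

end
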